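(* Let $d>1$ and let $L$ be an infinite simple modular ortholattice of height $d(L)=d$. Then $L$ has no finite test set.
   Context: A modular ortholattice (MOL) is a modular lattice with bounds $0,1$ together with an orthocomplementation $x\mapsto x'$ (an order-reversing involution with $x\wedge x'=0$, $x\vee x'=1$); its height is $d$ if maximal chains have $d+1$ elements. A subset $S\subseteq L$ is a test set for $L$ if every ortholattice identity which holds under all assignments of its variables to elements of $S$ holds in $L$. *)

theory Defs
  imports "HOL-Library.Complemented_Lattices"
begin

unbundle lattice_syntax

text \<open>Modular ortholattices are modelled as types of class orthocomplemented_lattice
  (bounded lattice with an order-reversing involutive complement x' = -x satisfying
  x \<sqinter> -x = bot, x \<squnion> -x = top) that satisfy the modular law.\<close>

definition modular_lattice :: "'a::lattice itself \<Rightarrow> bool" where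
  "modular_lattice _ \<longleftrightarrow> (\<forall>x y z::'a. x \<le> z \<longrightarrow> x \<squnion> (y \<sqinter> z) = (x \<squnion> y) \<sqinter> z)"

definition maximal_chain :: "'a::order set \<Rightarrow> bool" where
  "maximal_chain C \<longleftrightarrow> Complete_Partial_Order.chain (\<le>) C \<and>
     (\<forall>D. Complete_Partial_Order.chain (\<le>) D \<and> C \<subseteq> D \<longrightarrow> D = C)"

definition lattice_height :: "'a::order itself \<Rightarrow> nat \<Rightarrow> bool" where
  "lattice_height _ d \<longleftrightarrow> (\<forall>C::'a set. maximal_chain C \<longrightarrow> finite C \<and> card C = d + 1)"

definition ol_congruence :: "('a::orthocomplemented_lattice \<times> 'a) set \<Rightarrow> bool" where
  "ol_congruence R \<longleftrightarrow> equiv UNIV R \<and>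
     (\<forall>a b c d. (a,b) \<in> R \<and> (c,d) \<in> R \<longrightarrow> (a \<sqinter> c, b \<sqinter> d) \<in> R \<and> (a \<squnion> c, b \<squnion> d) \<in> R) \<and>
     (\<forall>a b. (a,b) \<in> R \<longrightarrow> (- a, - b) \<in> R)"

definition simple_ol :: "'a::orthocomplemented_lattice itself \<Rightarrow> bool" where
  "simple_ol _ \<longleftrightarrow> (\<exists>x y::'a. x \<noteq> y) \<and>
     (\<forall>R::('a \<times> 'a) set. ol_congruence R \<longrightarrow> R = Id \<or> R = UNIV)"

datatype ol_term = Var nat | Bot | Top | Meet ol_term ol_term | Join ol_term ol_term | Compl ol_term

primrec ol_eval :: "(nat \<Rightarrow> 'a::orthocomplemented_lattice) \<Rightarrow> ol_term \<Rightarrow> 'a" where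
  "ol_eval v (Var i) = v i"
| "ol_eval v Bot = bot"
| "ol_eval v Top = top"
| "ol_eval v (Meet s t) = ol_eval v s \<sqinter> ol_eval v t"
| "ol_eval v (Join s t) = ol_eval v s \<squnion> ol_eval v t"
| "ol_eval v (Compl s) = - ol_eval v s"

definition test_set :: "'a::orthocomplemented_lattice set \<Rightarrow> bool" where
  "test_set S \<longleftrightarrow> (\<forall>s t. (\<forall>v. (\<forall>i. v i \<in> S) \<longrightarrow> ol_eval v s = ol_eval v t) \<longrightarrow>
                           (\<forall>v::nat \<Rightarrow> 'a. ol_eval v s = ol_eval v t))"

end

theory Submission
  imports Defs
begin

lemma chain_card_le:
  fixes C :: "'a::order set"
  assumes h: "lattice_height TYPE('a) d"
    and ch: "Complete_Partial_Order.chain (\<le>) C"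
  shows "finite C \<and> card C \<le> d + 1"
proof -
  let ?A = "{D. Complete_Partial_Order.chain (\<le>) D \<and> C \<subseteq> D}"
  have ne: "?A \<noteq> {}" using ch by blast
  have "\<exists>M\<in>?A. \<forall>X\<in>?A. M \<subseteq> X \<longrightarrow> X = M"
  proof (rule subset_Zorn_nonempty[OF ne])
    fix \<C> assume "\<C> \<noteq> {}" and sc: "subset.chain ?A \<C>"
    have sub: "\<C> \<subseteq> ?A"
      using sc unfolding subset.chain_def by simp
    have tot: "\<forall>X\<in>\<C>. \<forall>Y\<in>\<C>. X \<subseteq> Y \<or> Y \<subseteq> X"
    proof (intro ballI)
      fix X Y assume "X \<in> \<C>" "Y \<in> \<C>"
      then have "X \<subset> Y \<or> X = Y \<or> Y \<subset> X"
        using sc unfolding subset.chain_def pred_on.chain_def by blast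
      then show "X \<subseteq> Y \<or> Y \<subseteq> X" by blast
    qed
    have "Complete_Partial_Order.chain (\<le>) (\<Union>\<C>)"
      unfolding Complete_Partial_Order.chain_def
    proof (intro ballI)
      fix x y assume "x \<in> \<Union>\<C>" "y \<in> \<Union>\<C>"
      then obtain X Y where XY: "X \<in> \<C>" "Y \<in> \<C>" "x \<in> X" "y \<in> Y" by blast
      show "x \<le> y \<or> y \<le> x"
      proof (cases "X \<subseteq> Y")
        case True
        then have "Complete_Partial_Order.chain (\<le>) Y" using sub XY by blast
        then show ?thesis using True XY unfolding Complete_Partial_Order.chain_def by blast
      next
        case False
        then have "Y \<subseteq> X" using tot XY by blast
        moreover have "Complete_Partial_Order.chain (\<le>) X" using sub XY by blast
        ultimately show ?thesis using XY unfolding Complete_Partial_Order.chain_def by blast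
      qed
    qed
    moreover have "C \<subseteq> \<Union>\<C>" using \<open>\<C> \<noteq> {}\<close> sub by blast
    ultimately show "\<Union>\<C> \<in> ?A" by blast
  qed
  then obtain M where M: "M \<in> ?A" "\<forall>X\<in>?A. M \<subseteq> X \<longrightarrow> X = M" by blast
  have "maximal_chain M" unfolding maximal_chain_def using M by blast
  then have "finite M \<and> card M = d + 1" using h unfolding lattice_height_def by blast
  with M(1) show ?thesis by (metis (no_types, lifting) card_mono finite_subset mem_Collect_eq)
qed

lemma no_inf_chain:
  fixes f :: "nat \<Rightarrow> 'a::order"
  assumes h: "lattice_height TYPE('a) d"
    and inj: "inj f" and cmp: "\<And>i j. f i \<le> f j \<or> f j \<le> f i"
  shows False
proof -
  have "Complete_Partial_Order.chain (\<le>) (f ` {..d+1})"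
    unfolding Complete_Partial_Order.chain_def using cmp by blast
  then have "card (f ` {..d+1}) \<le> d + 1" using chain_card_le[OF h] by blast
  moreover have "card (f ` {..d+1}) = d + 2"
    using inj by (simp add: card_image inj_on_subset)
  ultimately show False by simp
qed

lemma no_asc:
  fixes f :: "nat \<Rightarrow> 'a::order"
  assumes h: "lattice_height TYPE('a) d" and s: "\<And>i. f i < f (Suc i)"
  shows False
proof -
  have lt: "\<And>i j. i < j \<Longrightarrow> f i < f j" using s by (meson lift_Suc_mono_less)
  show False
  proof (rule no_inf_chain[OF h])
    show "inj f" unfolding inj_def by (metis lt less_irrefl linorder_neqE_nat)
    fix i j show "f i \<le> f j \<or> f j \<le> f i"
      by (metis lt less_imp_le linorder_neqE_nat order_refl)
  qed
qed

lemma wf_less_height: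
  assumes h: "lattice_height TYPE('a::orthocomplemented_lattice) d"
  shows "wf {(x::'a, y). x < y}"
proof -
  have "\<not> (\<exists>f. \<forall>i. (f (Suc i), f i) \<in> {(x::'a, y). x < y})"
  proof
    assume "\<exists>f. \<forall>i. (f (Suc i), f i) \<in> {(x::'a, y). x < y}"
    then obtain f :: "nat \<Rightarrow> 'a" where f: "\<And>i. f (Suc i) < f i" by blast
    show False using no_asc[OF h, of "\<lambda>i. - f i"] f by simp
  qed
  then show ?thesis using wf_iff_no_infinite_down_chain by blast
qed

definition covers :: "'a::order \<Rightarrow> 'a set" where
  "covers x = {y. x < y \<and> (\<forall>z. x < z \<longrightarrow> \<not> z < y)}"

lemma cov_le_eq0:
  fixes x :: "'a::order"
  assumes "p \<in> covers x" "q \<in> covers x" "p \<le> q"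
  shows "p = q"
proof -
  have "x < p" "\<not> p < q" using assms(1,2) unfolding covers_def by auto
  then show ?thesis using assms(3) order.order_iff_strict by blast
qed

lemma cov_meet:
  fixes x :: "'a::lattice"
  assumes "p \<in> covers x" "q \<in> covers x" "p \<noteq> q"
  shows "p \<sqinter> q = x"
proof -
  have px: "x < p" "x < q" using assms unfolding covers_def by auto
  have "x \<le> p \<sqinter> q" using px by (simp add: less_imp_le)
  moreover have "\<not> x < p \<sqinter> q"
  proof
    assume a: "x < p \<sqinter> q"
    have "\<not> p \<sqinter> q < p" using a assms(1) unfolding covers_def by blast
    then have "p \<sqinter> q = p" using inf.cobounded1 order.order_iff_strict by blast
    then have "p \<le> q" by (simp add: inf.absorb_iff1)
    then have "p = q" using cov_le_eq0 assms(1,2) by blast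
    then show False using assms(3) by simp
  qed
  ultimately show ?thesis by (simp add: order.order_iff_strict)
qed

lemma cov_le_eq:
  fixes x :: "'a::lattice"
  assumes "p \<in> covers x" "q \<in> covers x" "p \<le> q"
  shows "p = q"
proof -
  have "x < p" "\<not> p < q" using assms(1,2) unfolding covers_def by auto
  then show ?thesis using assms(3) order.order_iff_strict by blast
qed

lemma cov_join:
  fixes x :: "'a::lattice"
  assumes m: "modular_lattice TYPE('a)"
    and pq: "p \<in> covers x" "q \<in> covers x" "p \<noteq> q"
  shows "p \<sqinter> q = x" "p \<squnion> q \<in> covers q"
proof -
  show pm: "p \<sqinter> q = x" using cov_meet[OF pq] .
  have px: "x < p" "x < q" using pq unfolding covers_def by auto
  have lt: "q < p \<squnion> q"
  proof -
    have "q \<le> p \<squnion> q" by simp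
    moreover have "\<not> p \<le> q" using cov_le_eq[OF pq(1,2)] pq(3) by blast
    ultimately show ?thesis by (metis order.order_iff_strict sup.cobounded1)
  qed
  have "\<forall>z. q < z \<longrightarrow> \<not> z < p \<squnion> q"
  proof (intro allI impI notI)
    fix z assume qz: "q < z" and zj: "z < p \<squnion> q"
    have xz: "x \<le> z \<sqinter> p" using px qz by (meson le_inf_iff less_imp_le order.strict_trans)
    have "z \<sqinter> p = x"
    proof (rule ccontr)
      assume "z \<sqinter> p \<noteq> x"
      then have "x < z \<sqinter> p" using xz by (metis order.not_eq_order_implies_strict)
      then have "\<not> z \<sqinter> p < p" using pq(1) unfolding covers_def by blast
      then have "z \<sqinter> p = p" using inf.cobounded2 order.order_iff_strict by blast
      then have "p \<le> z" by (simp add: inf.absorb_iff2)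
      then have "p \<squnion> q \<le> z" using qz by simp
      then show False using zj leD by blast
    qed
    have "q \<squnion> (p \<sqinter> z) = (q \<squnion> p) \<sqinter> z"
      using m qz unfolding modular_lattice_def by simp
    also have "\<dots> = z" using zj by (simp add: inf.absorb2 sup.commute)
    finally have "z = q \<squnion> x" using \<open>z \<sqinter> p = x\<close> by (simp add: inf.commute)
    also have "\<dots> = q" using px by (simp add: sup.absorb1)
    finally show False using qz by simp
  qed
  then show "p \<squnion> q \<in> covers q" using lt unfolding covers_def by blast
qed

definition GF :: "'a::lattice itself \<Rightarrow> bool" where
  "GF _ \<longleftrightarrow> (\<exists>(a::'a) b Y. a < b \<and> infinite Y \<and>
      (\<forall>y\<in>Y. \<forall>z\<in>Y. y \<noteq> z \<longrightarrow> y \<sqinter> z = a \<and> y \<squnion> z = b))"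

lemma stepA:
  fixes x :: "'a::lattice"
  assumes m: "modular_lattice TYPE('a)"
    and inf: "infinite (covers x)" and ng: "\<not> GF TYPE('a)"
  shows "\<exists>y. x < y \<and> infinite (covers y)"
proof -
  obtain y0 where y0: "y0 \<in> covers x" using inf by (metis finite.emptyI ex_in_conv)
  define C' where "C' = covers x - {y0}"
  have iC: "infinite C'" using inf unfolding C'_def by simp
  have hc: "\<And>j. j \<in> C' \<Longrightarrow> y0 \<squnion> j \<in> covers y0"
    using cov_join(2)[OF m] y0 unfolding C'_def by (metis DiffE singletonI sup.commute)
  show ?thesis
  proof (cases "finite ((\<lambda>j. y0 \<squnion> j) ` C')")
    case True
    have "C' \<subseteq> (\<Union>w\<in>(\<lambda>j. y0 \<squnion> j) ` C'. {j\<in>C'. y0 \<squnion> j = w})" by blast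
    then obtain w where w: "w \<in> (\<lambda>j. y0 \<squnion> j) ` C'" and iF: "infinite {j\<in>C'. y0 \<squnion> j = w}"
      using True iC by (meson finite_UN finite_subset)
    define F where "F = {j\<in>C'. y0 \<squnion> j = w}"
    have "GF TYPE('a)"
      unfolding GF_def
    proof (intro exI conjI)
      show "infinite F" using iF F_def by simp
      obtain j0 where j0: "j0 \<in> C'" "w = y0 \<squnion> j0" using w by blast
      have "x < j0" using j0 unfolding C'_def covers_def by auto
      also have "j0 \<le> w" using j0 by simp
      finally show "x < w" .
      show "\<forall>y\<in>F. \<forall>z\<in>F. y \<noteq> z \<longrightarrow> y \<sqinter> z = x \<and> y \<squnion> z = w"
      proof (intro ballI impI)
        fix y z assume yF: "y \<in> F" and zF: "z \<in> F" and yz: "y \<noteq> z"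
        have yc: "y \<in> covers x" "z \<in> covers x" "y \<noteq> y0" using yF zF unfolding F_def C'_def by auto
        show "y \<sqinter> z = x \<and> y \<squnion> z = w"
        proof
          show "y \<sqinter> z = x" using cov_meet[OF yc(1,2) yz] .
          have wy: "w \<in> covers y" using cov_join(2)[OF m y0 yc(1)] yc(3) yF unfolding F_def by auto
          have "z \<le> w" using zF unfolding F_def by auto
          then have le: "y \<squnion> z \<le> w" using wy unfolding covers_def by auto
          have "\<not> z \<le> y" using cov_le_eq[OF yc(2,1)] yz by blast
          then have "y < y \<squnion> z" by (metis order.order_iff_strict sup.cobounded1 sup.cobounded2)
          then have "\<not> y \<squnion> z < w" using wy unfolding covers_def by blast
          then show "y \<squnion> z = w" using le by (simp add: order.order_iff_strict)
        qed
      qed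
    qed
    then show ?thesis using ng by blast
  next
    case False
    have "(\<lambda>j. y0 \<squnion> j) ` C' \<subseteq> covers y0" using hc by blast
    then have "infinite (covers y0)" using False finite_subset by blast
    moreover have "x < y0" using y0 unfolding covers_def by auto
    ultimately show ?thesis by blast
  qed
qed

lemma stepB:
  fixes x :: "'a::orthocomplemented_lattice"
  assumes h: "lattice_height TYPE('a) d"
    and inf: "infinite {z. x \<le> z}" and fin: "finite (covers x)"
  shows "\<exists>y. x < y \<and> infinite {z. y \<le> z}"
proof -
  have wf: "wf {(x::'a, y). x < y}" using wf_less_height[OF h] .
  have "{z. x \<le> z} \<subseteq> {x} \<union> (\<Union>c\<in>covers x. {z. c \<le> z})"
  proof
    fix z assume "z \<in> {z. x \<le> z}"
    then have xz: "x \<le> z" by simp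
    show "z \<in> {x} \<union> (\<Union>c\<in>covers x. {z. c \<le> z})"
    proof (cases "z = x")
      case False
      then have "z \<in> {w. x < w \<and> w \<le> z}" using xz by simp
      then obtain c where c: "c \<in> {w. x < w \<and> w \<le> z}"
        and mn: "\<And>y. (y, c) \<in> {(x::'a, y). x < y} \<Longrightarrow> y \<notin> {w. x < w \<and> w \<le> z}"
        using wfE_min[OF wf] by metis
      have "c \<in> covers x" unfolding covers_def
      proof (intro CollectI conjI allI impI notI)
        show "x < c" using c by simp
        fix w assume "x < w" "w < c"
        then show False using mn[of w] c by auto
      qed
      then show ?thesis using c by blast
    qed simp
  qed
  then have "infinite ({x} \<union> (\<Union>c\<in>covers x. {z. c \<le> z}))" using inf finite_subset by blast
  then obtain c where "c \<in> covers x" "infinite {z. c \<le> z}" using fin by blast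
  then show ?thesis unfolding covers_def by blast
qed

lemma GF_exists:
  assumes m: "modular_lattice TYPE('a::orthocomplemented_lattice)"
    and h: "lattice_height TYPE('a) d"
    and inf: "infinite (UNIV :: 'a set)"
  shows "GF TYPE('a)"
proof (rule ccontr)
  assume ng: "\<not> GF TYPE('a)"
  have step: "\<exists>y. x < y \<and> infinite {z. y \<le> z}" if "infinite {z::'a. x \<le> z}" for x
  proof (cases "finite (covers x)")
    case True then show ?thesis using stepB[OF h that] by blast
  next
    case False
    then obtain y where y: "x < y" "infinite (covers y)" using stepA[OF m _ ng] by blast
    have "covers y \<subseteq> {z. y \<le> z}" unfolding covers_def by auto
    then show ?thesis using y finite_subset by blast
  qed
  have "\<exists>f. \<forall>n. infinite {z::'a. f n \<le> z} \<and> f n < f (Suc n)"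
  proof (rule dependent_nat_choice[where P="\<lambda>_ x. infinite {z::'a. x \<le> z}" and Q="\<lambda>_ x y. x < y"])
    have "{z::'a. bot \<le> z} = UNIV" by simp
    then show "\<exists>x. infinite {z::'a. x \<le> z}" using inf by metis
  next
    fix x :: 'a and n assume "infinite {z. x \<le> z}"
    then show "\<exists>y. infinite {z. y \<le> z} \<and> x < y" using step by blast
  qed
  then obtain f :: "nat \<Rightarrow> 'a" where "\<And>n. f n < f (Suc n)" by blast
  then show False using no_asc[OF h] by blast
qed

fun joins :: "ol_term list \<Rightarrow> ol_term" where
  "joins [] = Bot"
| "joins (t # ts) = Join t (joins ts)"

definition E :: "ol_term \<Rightarrow> ol_term \<Rightarrow> ol_term" where
  "E u w = Join (Meet u w) (Compl (Join u w))"

definition pairs :: "nat \<Rightarrow> (nat \<times> nat) list" where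
  "pairs M = [(i,j). j \<leftarrow> [0..<M], i \<leftarrow> [0..<j]]"

definition TT :: "nat \<Rightarrow> ol_term" where
  "TT M = joins (map (\<lambda>(i,j). E (Var i) (Var j)) (pairs M))"

lemma eval_joins_top:
  fixes v :: "nat \<Rightarrow> 'a::orthocomplemented_lattice"
  shows "t \<in> set ts \<Longrightarrow> ol_eval v t = top \<Longrightarrow> ol_eval v (joins ts) = top"
  by (induction ts) auto

lemma eval_joins_const:
  fixes v :: "nat \<Rightarrow> 'a::orthocomplemented_lattice"
  shows "ts \<noteq> [] \<Longrightarrow> (\<forall>t\<in>set ts. ol_eval v t = c) \<Longrightarrow> ol_eval v (joins ts) = c"
proof (induction ts)
  case Nil then show ?case by simp
next
  case (Cons t ts)
  then show ?case by (cases "ts = []") auto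
qed

lemma pairs_mem: "(i,j) \<in> set (pairs M) \<longleftrightarrow> i < j \<and> j < M"
  unfolding pairs_def by (auto simp: image_iff)

theorem mainTheorem6:
  fixes d :: nat
  assumes "d > 1"
    and "modular_lattice TYPE('a::orthocomplemented_lattice)"
    and "infinite (UNIV :: 'a set)"
    and "simple_ol TYPE('a)"
    and "lattice_height TYPE('a) d"
  shows "\<not> (\<exists>S :: 'a set. finite S \<and> test_set S)"
proof
  assume "\<exists>S :: 'a set. finite S \<and> test_set S"
  then obtain S :: "'a set" where fS: "finite S" and tS: "test_set S" by blast
  define M where "M = card S + 2"
  have holds: "ol_eval v (TT M) = ol_eval v Top" if vS: "\<forall>i. v i \<in> S" for v :: "nat \<Rightarrow> 'a"
  proof -
    have "\<not> inj_on v {0..<M}"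
    proof
      assume "inj_on v {0..<M}"
      then have "card (v ` {0..<M}) = M" by (simp add: card_image)
      moreover have "card (v ` {0..<M}) \<le> card S"
        using vS fS by (intro card_mono) auto
      ultimately show False unfolding M_def by simp
    qed
    then obtain i j where ij: "i < M" "j < M" "i \<noteq> j" "v i = v j"
      unfolding inj_on_def by auto
    obtain i' j' where ij': "i' < j'" "j' < M" "v i' = v j'"
      using ij by (metis linorder_neqE_nat)
    have "E (Var i') (Var j') \<in> set (map (\<lambda>(i,j). E (Var i) (Var j)) (pairs M))"
      using ij' pairs_mem by fastforce
    moreover have "ol_eval v (E (Var i') (Var j')) = top"
      unfolding E_def using ij' by (simp add: sup.commute)
    ultimately show ?thesis unfolding TT_def using eval_joins_top
      by (metis ol_eval.simps(3))
  qed
  then have allv: "\<forall>v :: nat \<Rightarrow> 'a. ol_eval v (TT M) = ol_eval v Top"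
    using tS unfolding test_set_def by blast
  have "GF TYPE('a)" using GF_exists assms(2,3,5) by blast
  then obtain a b :: 'a and Y where ab: "a < b" and iY: "infinite Y"
    and pw: "\<forall>y\<in>Y. \<forall>z\<in>Y. y \<noteq> z \<longrightarrow> y \<sqinter> z = a \<and> y \<squnion> z = b"
    unfolding GF_def by blast
  obtain g :: "nat \<Rightarrow> 'a" where g: "inj g" "range g \<subseteq> Y"
    using infinite_countable_subset[OF iY] by blast
  have "ol_eval g (TT M) = a \<squnion> - b"
    unfolding TT_def
  proof (rule eval_joins_const)
    have "(0,1) \<in> set (pairs M)" using pairs_mem M_def by simp
    then show "map (\<lambda>(i,j). E (Var i) (Var j)) (pairs M) \<noteq> []" by auto
    show "\<forall>t\<in>set (map (\<lambda>(i,j). E (Var i) (Var j)) (pairs M)). ol_eval g t = a \<squnion> - b"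
    proof
      fix t assume "t \<in> set (map (\<lambda>(i,j). E (Var i) (Var j)) (pairs M))"
      then obtain i j where t: "t = E (Var i) (Var j)" "i < j"
        using pairs_mem by auto
      have "g i \<noteq> g j" using g(1) t(2) by (metis inj_eq less_irrefl)
      moreover have "g i \<in> Y" "g j \<in> Y" using g(2) by auto
      ultimately have "g i \<sqinter> g j = a" "g i \<squnion> g j = b" using pw by auto
      then show "ol_eval g t = a \<squnion> - b" unfolding t E_def by simp
    qed
  qed
  moreover have "a \<squnion> - b \<noteq> top"
  proof
    assume at: "a \<squnion> - b = top"
    have "a \<squnion> (- b \<sqinter> b) = (a \<squnion> - b) \<sqinter> b"
    proof -
      have ml: "\<forall>x y z::'a. x \<le> z \<longrightarrow> x \<squnion> (y \<sqinter> z) = (x \<squnion> y) \<sqinter> z"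
        using assms(2) unfolding modular_lattice_def .
      have "a \<le> b" using ab by simp
      then show ?thesis using ml by blast
    qed
    then have "a = b" using at by (simp add: inf.commute)
    then show False using ab by simp
  qed
  ultimately show False using allv by simp
qed

end
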